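(* Let $k$ be a field and $\mathcal{R}=\mathrm{RCFM}(k)$. There are short exact sequences (extensions) of right $\mathcal{R}$-modules $$0\to\mathcal{A}\to\mathcal{B}\to\mathcal{C}\to0\qquad\text{and}\qquad 0\to\mathcal{R}\to\mathcal{B}_\infty\to\mathcal{C}_\infty\to0.$$
   Context: $\mathcal{R}=\mathrm{RCFM}(k)$ is the $k$-algebra of $\mathbb{N}_0\times\mathbb{N}_0$ row-column-finite matrices over $k$. $\mathsf{A}$: $\mathsf{a}_{i+1,i}=1$ ($i\in\mathbb{N}_0$), other entries $0$; $\mathsf{B}$: $\mathsf{b}_{\frac{n(n+1)}{2}+i,\frac{(n-1)n}{2}+i}=1$ ($n>0$, $0\le i<n$), other entries $0$. $\mathcal{A}=\mathcal{R}/\mathsf{A}\mathcal{R}$, $\mathcal{B}=\mathcal{R}/(\mathsf{I}-\mathsf{A})\mathcal{R}$, $\mathcal{C}=\mathcal{R}/(\mathsf{I}-\mathsf{A}^t)\mathcal{R}$, $\mathcal{B}_\infty=\mathcal{R}/(\mathsf{I}-\mathsf{B})\mathcal{R}$, $\mathcal{C}_\infty=\mathcal{R}/(\mathsf{I}-\mathsf{B}^t)\mathcal{R}$. *)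

theory Defs
  imports Main
begin

type_synonym 'k mat = "nat \<Rightarrow> nat \<Rightarrow> 'k"

definition RCFM :: "'k::field mat set" where
  "RCFM = {M. (\<forall>i. finite {j. M i j \<noteq> 0}) \<and> (\<forall>j. finite {i. M i j \<noteq> 0})}"

definition mzero :: "'k::field mat" where "mzero = (\<lambda>i j. 0)"
definition mident :: "'k::field mat" where "mident = (\<lambda>i j. if i = j then 1 else 0)"
definition madd :: "'k::field mat \<Rightarrow> 'k mat \<Rightarrow> 'k mat" where
  "madd M N = (\<lambda>i j. M i j + N i j)"
definition msub :: "'k::field mat \<Rightarrow> 'k mat \<Rightarrow> 'k mat" where
  "msub M N = (\<lambda>i j. M i j - N i j)"
definition mmul :: "'k::field mat \<Rightarrow> 'k mat \<Rightarrow> 'k mat" where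
  "mmul M N = (\<lambda>i j. \<Sum>l\<in>{l. M i l \<noteq> 0}. M i l * N l j)"
definition mtrans :: "'k::field mat \<Rightarrow> 'k mat" where
  "mtrans M = (\<lambda>i j. M j i)"

definition matA :: "'k::field mat" where
  "matA = (\<lambda>p q. if p = q + 1 then 1 else 0)"

definition matB :: "'k::field mat" where
  "matB = (\<lambda>p q. if (\<exists>n i. 0 < n \<and> i < n \<and> p = n * (n + 1) div 2 + i
                               \<and> q = (n - 1) * n div 2 + i) then 1 else 0)"

text \<open>The coset a + xR of the right ideal xR, and the right R-module R/xR.\<close>
definition cls :: "'k::field mat \<Rightarrow> 'k mat \<Rightarrow> 'k mat set" where
  "cls x a = {madd a (mmul x s) | s. s \<in> RCFM}"

definition quot :: "'k::field mat \<Rightarrow> 'k mat set set" where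
  "quot x = cls x ` RCFM"

definition rmod_hom :: "'k::field mat \<Rightarrow> 'k mat \<Rightarrow> ('k mat set \<Rightarrow> 'k mat set) \<Rightarrow> bool" where
  "rmod_hom x y f \<longleftrightarrow>
     (\<forall>X\<in>quot x. f X \<in> quot y) \<and>
     (\<forall>a\<in>RCFM. \<forall>b\<in>RCFM. \<forall>r\<in>RCFM. \<forall>a'\<in>RCFM. \<forall>b'\<in>RCFM.
        f (cls x a) = cls y a' \<and> f (cls x b) = cls y b' \<longrightarrow>
        f (cls x (madd (mmul a r) b)) = cls y (madd (mmul a' r) b'))"

definition short_exact :: "'k::field mat \<Rightarrow> 'k mat \<Rightarrow> 'k mat \<Rightarrow>
    ('k mat set \<Rightarrow> 'k mat set) \<Rightarrow> ('k mat set \<Rightarrow> 'k mat set) \<Rightarrow> bool" where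
  "short_exact x y z f g \<longleftrightarrow>
     rmod_hom x y f \<and> rmod_hom y z g \<and>
     inj_on f (quot x) \<and> g ` quot y = quot z \<and>
     f ` quot x = {Y \<in> quot y. g Y = cls z mzero}"

end

theory Submission
  imports Defs
begin


lemma RCFM_rowfin: "M \<in> RCFM \<Longrightarrow> finite {j. M i j \<noteq> 0}"
  by (simp add: RCFM_def)
lemma RCFM_colfin: "M \<in> RCFM \<Longrightarrow> finite {i. M i j \<noteq> 0}"
  by (simp add: RCFM_def)

lemma mmul_eq_sum:
  assumes "finite S" "{l. M i l \<noteq> 0} \<subseteq> S"
  shows "mmul M N i j = (\<Sum>l\<in>S. M i l * N l j)"
  unfolding mmul_def using assms by (intro sum.mono_neutral_left) auto

lemma mmul_nz: assumes h: "mmul M N i j \<noteq> 0" shows "\<exists>l. M i l \<noteq> 0 \<and> N l j \<noteq> 0"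
proof (rule ccontr)
  assume "\<not> ?thesis"
  hence "\<forall>l\<in>{l. M i l \<noteq> 0}. M i l * N l j = 0" by auto
  hence "mmul M N i j = 0" unfolding mmul_def by (rule sum.neutral)
  with h show False by simp
qed

lemma mmul_RCFM: assumes "M \<in> RCFM" "N \<in> RCFM" shows "mmul M N \<in> RCFM"
proof -
  have "finite {j. mmul M N i j \<noteq> 0}" for i
  proof (rule finite_subset)
    show "{j. mmul M N i j \<noteq> 0} \<subseteq> (\<Union>l\<in>{l. M i l \<noteq> 0}. {j. N l j \<noteq> 0})"
      using mmul_nz[of M N i] by blast
    show "finite (\<Union>l\<in>{l. M i l \<noteq> 0}. {j. N l j \<noteq> 0})"
      using assms by (auto simp: RCFM_def)
  qed
  moreover have "finite {i. mmul M N i j \<noteq> 0}" for j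
  proof (rule finite_subset)
    show "{i. mmul M N i j \<noteq> 0} \<subseteq> (\<Union>l\<in>{l. N l j \<noteq> 0}. {i. M i l \<noteq> 0})"
      using mmul_nz[of M N _ j] by blast
    show "finite (\<Union>l\<in>{l. N l j \<noteq> 0}. {i. M i l \<noteq> 0})"
      using assms by (auto simp: RCFM_def)
  qed
  ultimately show ?thesis by (simp add: RCFM_def)
qed

lemma madd_RCFM: assumes "M \<in> RCFM" "N \<in> RCFM" shows "madd M N \<in> RCFM"
proof -
  have "finite {j. madd M N i j \<noteq> 0}" for i
    by (rule finite_subset[of _ "{j. M i j \<noteq> 0} \<union> {j. N i j \<noteq> 0}"])
       (use assms in \<open>auto simp: RCFM_def madd_def\<close>)
  moreover have "finite {i. madd M N i j \<noteq> 0}" for j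
    by (rule finite_subset[of _ "{i. M i j \<noteq> 0} \<union> {i. N i j \<noteq> 0}"])
       (use assms in \<open>auto simp: RCFM_def madd_def\<close>)
  ultimately show ?thesis by (simp add: RCFM_def)
qed

lemma msub_RCFM: assumes "M \<in> RCFM" "N \<in> RCFM" shows "msub M N \<in> RCFM"
proof -
  have "finite {j. msub M N i j \<noteq> 0}" for i
    by (rule finite_subset[of _ "{j. M i j \<noteq> 0} \<union> {j. N i j \<noteq> 0}"])
       (use assms in \<open>auto simp: RCFM_def msub_def\<close>)
  moreover have "finite {i. msub M N i j \<noteq> 0}" for j
    by (rule finite_subset[of _ "{i. M i j \<noteq> 0} \<union> {i. N i j \<noteq> 0}"])
       (use assms in \<open>auto simp: RCFM_def msub_def\<close>)
  ultimately show ?thesis by (simp add: RCFM_def)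
qed

lemma mzero_RCFM: "mzero \<in> RCFM" by (simp add: RCFM_def mzero_def)
lemma mident_RCFM: "(mident :: 'k::field mat) \<in> RCFM"
proof -
  have "{j. (mident :: 'k mat) i j \<noteq> 0} = {i}" for i by (auto simp: mident_def)
  moreover have "{i. (mident :: 'k mat) i j \<noteq> 0} = {j}" for j by (auto simp: mident_def)
  ultimately show ?thesis by (simp add: RCFM_def)
qed
lemma mtrans_RCFM: "M \<in> RCFM \<Longrightarrow> mtrans M \<in> RCFM" by (simp add: RCFM_def mtrans_def)

lemma mmul_madd_left: "mmul M (madd N N') = madd (mmul M N) (mmul M N')"
  unfolding mmul_def madd_def by (intro ext) (simp only: distrib_left sum.distrib)
lemma mmul_msub_left: "mmul M (msub N N') = msub (mmul M N) (mmul M N')"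
  unfolding mmul_def msub_def by (intro ext) (simp only: right_diff_distrib sum_subtractf)

lemma mmul_madd_right: assumes "M \<in> RCFM" "M' \<in> RCFM"
  shows "mmul (madd M M') N = madd (mmul M N) (mmul M' N)"
proof (rule ext, rule ext)
  fix i j
  let ?S = "{l. M i l \<noteq> 0} \<union> {l. M' i l \<noteq> 0}"
  have f: "finite ?S" using assms by (simp add: RCFM_def)
  have "mmul (madd M M') N i j = (\<Sum>l\<in>?S. madd M M' i l * N l j)"
    by (rule mmul_eq_sum[OF f]) (auto simp: madd_def)
  also have "\<dots> = (\<Sum>l\<in>?S. M i l * N l j) + (\<Sum>l\<in>?S. M' i l * N l j)"
    by (simp add: madd_def distrib_right sum.distrib)
  also have "\<dots> = mmul M N i j + mmul M' N i j"
    by (simp add: mmul_eq_sum[OF f])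
  finally show "mmul (madd M M') N i j = madd (mmul M N) (mmul M' N) i j"
    by (simp add: madd_def)
qed

lemma mmul_msub_right: assumes "M \<in> RCFM" "M' \<in> RCFM"
  shows "mmul (msub M M') N = msub (mmul M N) (mmul M' N)"
proof (rule ext, rule ext)
  fix i j
  let ?S = "{l. M i l \<noteq> 0} \<union> {l. M' i l \<noteq> 0}"
  have f: "finite ?S" using assms by (simp add: RCFM_def)
  have "mmul (msub M M') N i j = (\<Sum>l\<in>?S. msub M M' i l * N l j)"
    by (rule mmul_eq_sum[OF f]) (auto simp: msub_def)
  also have "\<dots> = (\<Sum>l\<in>?S. M i l * N l j) - (\<Sum>l\<in>?S. M' i l * N l j)"
    by (simp add: msub_def left_diff_distrib sum_subtractf)
  also have "\<dots> = mmul M N i j - mmul M' N i j"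
    by (simp add: mmul_eq_sum[OF f])
  finally show "mmul (msub M M') N i j = msub (mmul M N) (mmul M' N) i j"
    by (simp add: msub_def)
qed

lemma mmul_assoc: assumes "a \<in> RCFM" "b \<in> RCFM"
  shows "mmul (mmul a b) c = mmul a (mmul b c)"
proof (rule ext, rule ext)
  fix i j
  let ?S = "{l. a i l \<noteq> 0}"
  let ?U = "\<Union>l\<in>?S. {m. b l m \<noteq> 0}"
  have fS: "finite ?S" using assms by (simp add: RCFM_def)
  have fU: "finite ?U" using assms by (simp add: RCFM_def)
  have "mmul (mmul a b) c i j = (\<Sum>m\<in>?U. mmul a b i m * c m j)"
    by (rule mmul_eq_sum[OF fU]) (use mmul_nz[of a b i] in blast)
  also have "\<dots> = (\<Sum>m\<in>?U. \<Sum>l\<in>?S. a i l * b l m * c m j)"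
    by (simp add: mmul_def sum_distrib_right)
  also have "\<dots> = (\<Sum>l\<in>?S. \<Sum>m\<in>?U. a i l * b l m * c m j)"
    by (rule sum.swap)
  also have "\<dots> = (\<Sum>l\<in>?S. a i l * mmul b c l j)"
  proof (rule sum.cong[OF refl])
    fix l assume l: "l \<in> ?S"
    have "mmul b c l j = (\<Sum>m\<in>?U. b l m * c m j)"
      by (rule mmul_eq_sum[OF fU]) (use l in auto)
    thus "(\<Sum>m\<in>?U. a i l * b l m * c m j) = a i l * mmul b c l j"
      by (simp add: sum_distrib_left mult.assoc)
  qed
  also have "\<dots> = mmul a (mmul b c) i j" by (simp add: mmul_def)
  finally show "mmul (mmul a b) c i j = mmul a (mmul b c) i j" .
qed

lemma mmul_mident_left: "mmul mident M = M"
proof (rule ext, rule ext)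
  fix i j
  have "{l. mident i l \<noteq> (0::'a)} = {i}" by (auto simp: mident_def)
  thus "mmul mident M i j = M i j" by (simp add: mmul_def mident_def)
qed

lemma mmul_mident_right: assumes "M \<in> RCFM" shows "mmul M mident = M"
proof (rule ext, rule ext)
  fix i j
  let ?S = "{l. M i l \<noteq> 0} \<union> {j}"
  have f: "finite ?S" using assms by (simp add: RCFM_def)
  have "mmul M mident i j = (\<Sum>l\<in>?S. M i l * mident l j)"
    by (rule mmul_eq_sum[OF f]) auto
  also have "\<dots> = (\<Sum>l\<in>{j}. M i l * mident l j)"
    by (rule sum.mono_neutral_right[OF f]) (auto simp: mident_def)
  finally show "mmul M mident i j = M i j" by (simp add: mident_def)
qed

lemma mmul_mzero_left: "mmul mzero M = mzero"
  by (simp add: mmul_def mzero_def fun_eq_iff)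
lemma mmul_mzero_right: "mmul M mzero = mzero"
  by (simp add: mmul_def mzero_def fun_eq_iff)



definition mem :: "'k::field mat \<Rightarrow> 'k mat \<Rightarrow> bool" where
  "mem x a \<longleftrightarrow> (\<exists>s\<in>RCFM. a = mmul x s)"

lemma madd_msub_cancel: "madd b (msub a b) = a"
  by (simp add: madd_def msub_def fun_eq_iff)

lemma cls_eq_iff:
  assumes "x \<in> RCFM" "a \<in> RCFM" "b \<in> RCFM"
  shows "cls x a = cls x b \<longleftrightarrow> mem x (msub a b)"
proof
  assume "cls x a = cls x b"
  moreover have "a \<in> cls x a"
  proof -
    have "a = madd a (mmul x mzero)" by (simp add: mmul_mzero_right) (simp add: madd_def mzero_def)
    thus ?thesis unfolding cls_def using mzero_RCFM by blast
  qed
  ultimately have "a \<in> cls x b" by simp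
  then obtain s where s: "s \<in> RCFM" "a = madd b (mmul x s)" unfolding cls_def by auto
  hence "msub a b = mmul x s" by (simp add: madd_def msub_def fun_eq_iff)
  thus "mem x (msub a b)" using s unfolding mem_def by auto
next
  assume "mem x (msub a b)"
  then obtain t where t: "t \<in> RCFM" "msub a b = mmul x t" unfolding mem_def by auto
  have neg: "msub mzero t \<in> RCFM" using t mzero_RCFM msub_RCFM by blast
  show "cls x a = cls x b"
  proof
    show "cls x a \<subseteq> cls x b"
    proof
      fix u assume "u \<in> cls x a"
      then obtain s where s: "s \<in> RCFM" "u = madd a (mmul x s)" unfolding cls_def by auto
      have "u = madd b (madd (mmul x t) (mmul x s))"
        using s t(2)[symmetric] by (simp add: madd_def msub_def fun_eq_iff)
      also have "\<dots> = madd b (mmul x (madd t s))" by (simp add: mmul_madd_left)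
      finally have "u = madd b (mmul x (madd t s))" .
      thus "u \<in> cls x b" unfolding cls_def using s t madd_RCFM by blast
    qed
  next
    show "cls x b \<subseteq> cls x a"
    proof
      fix u assume "u \<in> cls x b"
      then obtain s where s: "s \<in> RCFM" "u = madd b (mmul x s)" unfolding cls_def by auto
      have "u = madd a (msub (mmul x s) (mmul x t))"
        using s t(2)[symmetric] by (simp add: madd_def msub_def fun_eq_iff)
      also have "\<dots> = madd a (mmul x (msub s t))" by (simp add: mmul_msub_left)
      finally have "u = madd a (mmul x (msub s t))" .
      thus "u \<in> cls x a" unfolding cls_def using s t msub_RCFM by blast
    qed
  qed
qed

lemma mem_add: assumes "mem y u" "mem y v" shows "mem y (madd u v)"
proof -
  obtain s t where st: "s \<in> RCFM" "t \<in> RCFM" "u = mmul y s" "v = mmul y t"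
    using assms unfolding mem_def by auto
  hence "madd u v = mmul y (madd s t)" by (simp add: mmul_madd_left)
  thus ?thesis unfolding mem_def using madd_RCFM[OF st(1,2)] by blast
qed

lemma mem_rmul: assumes "y \<in> RCFM" "r \<in> RCFM" "mem y u" shows "mem y (mmul u r)"
proof -
  obtain s where s: "s \<in> RCFM" "u = mmul y s" using assms unfolding mem_def by auto
  hence "mmul u r = mmul y (mmul s r)" using assms mmul_assoc by blast
  thus ?thesis unfolding mem_def using mmul_RCFM[OF s(1) assms(2)] by blast
qed

lemma key_hom:
  assumes "y \<in> RCFM" "u \<in> RCFM" "u' \<in> RCFM" "v \<in> RCFM" "v' \<in> RCFM" "r \<in> RCFM"
    and "mem y (msub u' u)" "mem y (msub v' v)"
  shows "mem y (msub (madd (mmul u' r) v') (madd (mmul u r) v))"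
proof -
  have "msub (madd (mmul u' r) v') (madd (mmul u r) v) = madd (mmul (msub u' u) r) (msub v' v)"
    using assms by (simp add: mmul_msub_right) (simp add: madd_def msub_def fun_eq_iff)
  thus ?thesis by (simp only:) (rule mem_add[OF mem_rmul], use assms in auto)
qed

definition lift :: "'k::field mat \<Rightarrow> 'k mat \<Rightarrow> 'k mat \<Rightarrow> 'k mat set \<Rightarrow> 'k mat set" where
  "lift x y J X = cls y (mmul J (SOME a. a \<in> RCFM \<and> X = cls x a))"

lemma lift_cls:
  assumes "x \<in> RCFM" "y \<in> RCFM" "J \<in> RCFM" "a \<in> RCFM"
    and wd: "\<And>s. s \<in> RCFM \<Longrightarrow> mem y (mmul J (mmul x s))"
  shows "lift x y J (cls x a) = cls y (mmul J a)"
proof -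
  define a0 where "a0 = (SOME a0. a0 \<in> RCFM \<and> cls x a = cls x a0)"
  have "a0 \<in> RCFM \<and> cls x a = cls x a0"
    unfolding a0_def by (rule someI[of _ a]) (use assms in auto)
  hence a0: "a0 \<in> RCFM" "mem x (msub a0 a)" using cls_eq_iff[OF assms(1), of a0 a] assms(4) by auto
  then obtain s where s: "s \<in> RCFM" "msub a0 a = mmul x s" unfolding mem_def by auto
  have "msub (mmul J a0) (mmul J a) = mmul J (mmul x s)"
    using s by (simp add: mmul_msub_left[symmetric])
  hence "mem y (msub (mmul J a0) (mmul J a))" using wd s by simp
  hence "cls y (mmul J a0) = cls y (mmul J a)"
    using cls_eq_iff[OF assms(2), of "mmul J a0" "mmul J a"] assms a0 mmul_RCFM by auto
  thus ?thesis unfolding lift_def a0_def by simp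
qed

lemma lift_hom:
  fixes x y J :: "'k::field mat"
  assumes "x \<in> RCFM" "y \<in> RCFM" "J \<in> RCFM"
    and wd: "\<And>s. s \<in> RCFM \<Longrightarrow> mem y (mmul J (mmul x s))"
  shows "rmod_hom x y (lift x y J)"
  unfolding rmod_hom_def
proof (intro conjI ballI impI)
  fix X assume "X \<in> quot x"
  then obtain a where a: "a \<in> RCFM" "X = cls x a" unfolding quot_def by auto
  show "lift x y J X \<in> quot y"
    using a lift_cls[OF assms(1-3) a(1) wd] mmul_RCFM[OF assms(3) a(1)] unfolding quot_def by auto
next
  fix a b r a' b' :: "'k mat" assume R: "a \<in> RCFM" "b \<in> RCFM" "r \<in> RCFM" "a' \<in> RCFM" "b' \<in> RCFM"
    and h: "lift x y J (cls x a) = cls y a' \<and> lift x y J (cls x b) = cls y b'"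
  have Ja: "mmul J a \<in> RCFM" "mmul J b \<in> RCFM" using R assms mmul_RCFM by auto
  have "cls y (mmul J a) = cls y a'" "cls y (mmul J b) = cls y b'"
    using h lift_cls[OF assms(1-3) _ wd] R by auto
  hence m: "mem y (msub a' (mmul J a))" "mem y (msub b' (mmul J b))"
    using cls_eq_iff[OF assms(2), of a' "mmul J a"] cls_eq_iff[OF assms(2), of b' "mmul J b"] Ja R by auto
  have ar: "madd (mmul a r) b \<in> RCFM" using R mmul_RCFM madd_RCFM by auto
  have eq: "mmul J (madd (mmul a r) b) = madd (mmul (mmul J a) r) (mmul J b)"
    using R assms by (simp add: mmul_madd_left mmul_assoc)
  have "mem y (msub (madd (mmul a' r) b') (mmul J (madd (mmul a r) b)))"
    unfolding eq by (rule key_hom) (use assms R Ja m in auto)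
  hence "cls y (madd (mmul a' r) b') = cls y (mmul J (madd (mmul a r) b))"
    using cls_eq_iff[OF assms(2), of "madd (mmul a' r) b'" "mmul J (madd (mmul a r) b)"] R Ja ar mmul_RCFM madd_RCFM assms by auto
  thus "lift x y J (cls x (madd (mmul a r) b)) = cls y (madd (mmul a' r) b')"
    using lift_cls[OF assms(1-3) ar wd] by simp
qed

lemma generic_exact:
  fixes x y z J T :: "'k::field mat"
  assumes RC: "x \<in> RCFM" "y \<in> RCFM" "z \<in> RCFM" "J \<in> RCFM" "T \<in> RCFM"
    and h1: "mmul J x = mzero"
    and h2: "y = mmul z T"
    and h3: "\<And>a. a \<in> RCFM \<Longrightarrow> mem y (mmul J a) \<Longrightarrow> mem x a"
    and h4: "\<And>a. a \<in> RCFM \<Longrightarrow> mem z (mmul J a)"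
    and h5: "\<And>a. a \<in> RCFM \<Longrightarrow> mem z a \<Longrightarrow> \<exists>a'\<in>RCFM. mem y (msub a (mmul J a'))"
  shows "\<exists>f g. short_exact x y z f g"
proof -
  have wd1: "mem y (mmul J (mmul x s))" if "s \<in> RCFM" for s
  proof -
    have "mmul J (mmul x s) = mmul y mzero"
      using RC by (simp add: mmul_assoc[symmetric] h1 mmul_mzero_left mmul_mzero_right)
    thus ?thesis unfolding mem_def using mzero_RCFM by blast
  qed
  have wd2: "mem z (mmul mident (mmul y s))" if "s \<in> RCFM" for s
    unfolding mem_def using that RC h2 mmul_RCFM
    by (intro bexI[of _ "mmul T s"]) (auto simp: mmul_mident_left mmul_assoc)
  let ?f = "lift x y J" and ?g = "lift y z mident"
  have fc: "?f (cls x a) = cls y (mmul J a)" if "a \<in> RCFM" for a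
    by (rule lift_cls[OF RC(1,2,4) that wd1])
  have gc: "?g (cls y a) = cls z a" if "a \<in> RCFM" for a
    using lift_cls[OF RC(2,3) mident_RCFM that wd2] by (simp add: mmul_mident_left)
  have z0: "cls z a = cls z mzero \<longleftrightarrow> mem z a" if "a \<in> RCFM" for a
    using cls_eq_iff[OF RC(3) that mzero_RCFM] by (simp add: msub_def mzero_def)
  have "short_exact x y z ?f ?g"
    unfolding short_exact_def
  proof (intro conjI)
    show "rmod_hom x y ?f" by (rule lift_hom[OF RC(1,2,4) wd1])
    show "rmod_hom y z ?g" by (rule lift_hom[OF RC(2,3) mident_RCFM wd2])
    show "inj_on ?f (quot x)"
    proof (rule inj_onI)
      fix X Y assume "X \<in> quot x" "Y \<in> quot x" and e: "?f X = ?f Y"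
      then obtain a b where ab: "a \<in> RCFM" "b \<in> RCFM" "X = cls x a" "Y = cls x b"
        unfolding quot_def by auto
      have "cls y (mmul J a) = cls y (mmul J b)" using e ab fc by simp
      hence "mem y (msub (mmul J a) (mmul J b))"
        using cls_eq_iff[OF RC(2), of "mmul J a" "mmul J b"] ab RC mmul_RCFM by auto
      hence "mem y (mmul J (msub a b))" by (simp add: mmul_msub_left)
      hence "mem x (msub a b)" using h3 ab msub_RCFM by blast
      thus "X = Y" using cls_eq_iff[OF RC(1), of a b] ab by auto
    qed
    show "?g ` quot y = quot z"
      unfolding quot_def using gc by (auto simp: image_iff)
    show "?f ` quot x = {Y \<in> quot y. ?g Y = cls z mzero}"
    proof
      show "?f ` quot x \<subseteq> {Y \<in> quot y. ?g Y = cls z mzero}"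
      proof
        fix Y assume "Y \<in> ?f ` quot x"
        then obtain a where a: "a \<in> RCFM" "Y = cls y (mmul J a)"
          unfolding quot_def using fc by auto
        have Ja: "mmul J a \<in> RCFM" using a RC mmul_RCFM by auto
        show "Y \<in> {Y \<in> quot y. ?g Y = cls z mzero}"
          using a Ja gc z0 h4 unfolding quot_def by auto
      qed
    next
      show "{Y \<in> quot y. ?g Y = cls z mzero} \<subseteq> ?f ` quot x"
      proof
        fix Y assume "Y \<in> {Y \<in> quot y. ?g Y = cls z mzero}"
        then obtain a where a: "a \<in> RCFM" "Y = cls y a" "cls z a = cls z mzero"
          unfolding quot_def using gc by auto
        hence "mem z a" using z0 by simp
        then obtain a' where a': "a' \<in> RCFM" "mem y (msub a (mmul J a'))" using h5 a by blast
        have "cls y a = cls y (mmul J a')"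
          using cls_eq_iff[OF RC(2), of a "mmul J a'"] a a' RC mmul_RCFM by auto
        hence "Y = ?f (cls x a')" using fc a a' by simp
        thus "Y \<in> ?f ` quot x" using a' unfolding quot_def by auto
      qed
    qed
  qed
  thus ?thesis by blast
qed



definition fm :: "(nat \<Rightarrow> nat) \<Rightarrow> 'k::field mat" where
  "fm \<sigma> = (\<lambda>p q. if p = \<sigma> q then 1 else 0)"

lemma fm_RCFM: assumes "inj \<sigma>" shows "(fm \<sigma> :: 'k::field mat) \<in> RCFM"
proof -
  have "{q. (fm \<sigma> :: 'k mat) p q \<noteq> 0} = \<sigma> -` {p}" for p by (auto simp: fm_def)
  hence "finite {q. (fm \<sigma> :: 'k mat) p q \<noteq> 0}" for p using finite_vimageI[OF _ assms] by simp
  moreover have "{p. (fm \<sigma> :: 'k mat) p q \<noteq> 0} = {\<sigma> q}" for q by (auto simp: fm_def)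
  ultimately show ?thesis by (simp add: RCFM_def)
qed

lemma fm_mul_at: fixes b :: "'k::field mat" assumes "inj \<sigma>" shows "mmul (fm \<sigma>) b (\<sigma> q) j = b q j"
proof -
  have "{l. (fm \<sigma> :: 'k::field mat) (\<sigma> q) l \<noteq> 0} = {q}" using assms by (auto simp: fm_def inj_def)
  thus ?thesis by (simp add: mmul_def fm_def)
qed

lemma fm_mul_out: fixes b :: "'k::field mat" assumes "p \<notin> range \<sigma>" shows "mmul (fm \<sigma>) b p j = 0"
proof -
  have "{l. (fm \<sigma> :: 'k::field mat) p l \<noteq> 0} = {}" using assms by (auto simp: fm_def)
  thus ?thesis unfolding mmul_def by (simp only: sum.empty)
qed

lemma fmt_mul: fixes b :: "'k::field mat" shows "mmul (mtrans (fm \<sigma>)) b q j = b (\<sigma> q) j"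
proof -
  have "{l. mtrans (fm \<sigma> :: 'k::field mat) q l \<noteq> 0} = {\<sigma> q}" by (auto simp: fm_def mtrans_def)
  thus ?thesis by (simp add: mmul_def fm_def mtrans_def)
qed

lemma fmt_fm: assumes "inj \<sigma>" shows "mmul (mtrans (fm \<sigma>)) (fm \<sigma>) = mident"
  by (intro ext) (simp only: fmt_mul, simp add: fm_def mident_def inj_eq[OF assms])

lemma fm_fmt: assumes "inj \<sigma>"
  shows "mmul (fm \<sigma>) (mtrans (fm \<sigma>)) p q = (if p \<in> range \<sigma> \<and> p = q then 1 else 0)"
proof (cases "p \<in> range \<sigma>")
  case True
  then obtain c where "p = \<sigma> c" by auto
  hence "mmul (fm \<sigma>) (mtrans (fm \<sigma>)) p q = (mtrans (fm \<sigma>) c q :: 'k::field)"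
    using fm_mul_at[OF assms] by simp
  thus ?thesis using \<open>p = \<sigma> c\<close> by (auto simp: mtrans_def fm_def)
next
  case False thus ?thesis using fm_mul_out by simp
qed

lemma chain_zero:
  fixes s :: "'k::field mat"
  assumes inj: "inj \<sigma>" and inc: "\<And>q. q < \<sigma> q" and s: "s \<in> RCFM"
    and z: "\<And>q j. mmul (msub mident (fm \<sigma>)) s (\<sigma> q) j = 0"
  shows "s = mzero"
proof (rule ccontr)
  assume "s \<noteq> mzero"
  then obtain q j where nz: "s q j \<noteq> 0" by (auto simp: mzero_def fun_eq_iff)
  have e: "mmul (msub mident (fm \<sigma>)) s = msub s (mmul (fm \<sigma>) s)"
    using mmul_msub_right[OF mident_RCFM fm_RCFM[OF inj]] by (simp add: mmul_mident_left)
  have step: "s (\<sigma> p) j = s p j" for p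
    using z[of p j] unfolding e by (simp add: msub_def fm_mul_at[OF inj])
  have it: "s ((\<sigma> ^^ n) q) j = s q j" for n
    by (induction n) (simp_all add: step)
  have sm: "strict_mono (\<lambda>n. (\<sigma> ^^ n) q)"
    unfolding strict_mono_Suc_iff by (simp add: inc)
  have "inj (\<lambda>n. (\<sigma> ^^ n) q)" by (rule strict_mono_imp_inj_on[OF sm])
  moreover have "range (\<lambda>n. (\<sigma> ^^ n) q) \<subseteq> {i. s i j \<noteq> 0}" using it nz by auto
  ultimately have "infinite {i. s i j \<noteq> 0}" using infinite_iff_countable_subset by blast
  thus False using s by (simp add: RCFM_def)
qed

lemma chain_h2:
  assumes inj: "inj \<sigma>"
  shows "msub mident (fm \<sigma>) = mmul (msub mident (mtrans (fm \<sigma>))) (msub mzero (fm \<sigma>) :: 'k::field mat)"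
proof -
  have P: "(fm \<sigma> :: 'k mat) \<in> RCFM" by (rule fm_RCFM[OF inj])
  have "mmul (msub mident (mtrans (fm \<sigma>))) (msub mzero (fm \<sigma>) :: 'k::field mat)
     = msub (msub mzero (fm \<sigma>)) (msub mzero mident)"
    using mmul_msub_right[OF mident_RCFM mtrans_RCFM[OF P]]
    by (simp add: mmul_mident_left mmul_msub_left mmul_mzero_right fmt_fm[OF inj])
      (simp add: msub_def mzero_def fun_eq_iff)
  thus ?thesis by (simp add: msub_def mzero_def fun_eq_iff)
qed

lemma chain_h4:
  fixes J :: "'k::field mat"
  assumes inj: "inj \<sigma>" and J: "J \<in> RCFM" and a: "a \<in> RCFM"
    and PJ: "mmul (mtrans (fm \<sigma>)) J = mzero"
  shows "mem (msub mident (mtrans (fm \<sigma>))) (mmul J a)"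
proof -
  have P: "(fm \<sigma> :: 'k mat) \<in> RCFM" by (rule fm_RCFM[OF inj])
  have "mmul (msub mident (mtrans (fm \<sigma>))) (mmul J a) = msub (mmul J a) (mmul (mmul (mtrans (fm \<sigma>)) J) a)"
    using mmul_msub_right[OF mident_RCFM mtrans_RCFM[OF P]] mmul_assoc[OF mtrans_RCFM[OF P] J]
    by (simp add: mmul_mident_left)
  also have "\<dots> = mmul J a" by (simp only: PJ mmul_mzero_left) (simp add: msub_def mzero_def)
  finally show ?thesis unfolding mem_def using mmul_RCFM[OF J a] by metis
qed

lemma chain_h5:
  fixes J K :: "'k::field mat"
  assumes inj: "inj \<sigma>" and J: "J \<in> RCFM" and K: "K \<in> RCFM" and a: "a \<in> RCFM"
    and JK: "mmul J K = msub mident (mmul (fm \<sigma>) (mtrans (fm \<sigma>)))"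
    and m: "mem (msub mident (mtrans (fm \<sigma>))) a"
  shows "\<exists>a'\<in>RCFM. mem (msub mident (fm \<sigma>)) (msub a (mmul J a'))"
proof -
  have P: "(fm \<sigma> :: 'k mat) \<in> RCFM" by (rule fm_RCFM[OF inj])
  have Pt: "mtrans (fm \<sigma>) \<in> (RCFM :: 'k mat set)" by (rule mtrans_RCFM[OF P])
  obtain s where s: "s \<in> RCFM" "a = mmul (msub mident (mtrans (fm \<sigma>))) s"
    using m unfolding mem_def by auto
  define u where "u = mmul (mtrans (fm \<sigma>)) s"
  have u: "u \<in> RCFM" unfolding u_def by (rule mmul_RCFM[OF Pt s(1)])
  have a1: "a = msub s u"
    unfolding s(2) u_def using mmul_msub_right[OF mident_RCFM Pt] by (simp add: mmul_mident_left)
  have JKs: "mmul J (mmul K s) = msub s (mmul (fm \<sigma>) u)"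
    unfolding u_def mmul_assoc[OF J K, symmetric] JK
    using mmul_msub_right[OF mident_RCFM mmul_RCFM[OF P Pt]] mmul_assoc[OF P Pt]
    by (simp add: mmul_mident_left)
  have "mmul (msub mident (fm \<sigma>)) (msub mzero u) = msub (msub mzero u) (msub mzero (mmul (fm \<sigma>) u))"
    using mmul_msub_right[OF mident_RCFM P] by (simp add: mmul_mident_left mmul_msub_left mmul_mzero_right)
      (simp add: msub_def mzero_def fun_eq_iff)
  also have "\<dots> = msub a (mmul J (mmul K s))"
    unfolding a1 JKs by (simp add: msub_def mzero_def fun_eq_iff)
  finally have "mem (msub mident (fm \<sigma>)) (msub a (mmul J (mmul K s)))"
    unfolding mem_def using msub_RCFM[OF mzero_RCFM u] by metis
  thus ?thesis using mmul_RCFM[OF K s(1)] by blast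
qed



lemma part1_gen:
  assumes inj: "inj \<sigma>" and inc: "\<And>q. q < \<sigma> q"
  shows "\<exists>f g. short_exact (fm \<sigma> :: 'k::field mat) (msub mident (fm \<sigma>)) (msub mident (mtrans (fm \<sigma>))) f g"
proof -
  define P :: "'k mat" where "P = fm \<sigma>"
  define E where "E = msub mident (mmul P (mtrans P))"
  have P: "P \<in> RCFM" unfolding P_def by (rule fm_RCFM[OF inj])
  have Pt: "mtrans P \<in> RCFM" by (rule mtrans_RCFM[OF P])
  have PPt: "mmul P (mtrans P) \<in> RCFM" by (rule mmul_RCFM[OF P Pt])
  have E: "E \<in> RCFM" unfolding E_def by (rule msub_RCFM[OF mident_RCFM PPt])
  have Emul: "mmul E b = msub b (mmul P (mmul (mtrans P) b))" for b
    unfolding E_def using mmul_msub_right[OF mident_RCFM PPt] mmul_assoc[OF P Pt]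
    by (simp add: mmul_mident_left)
  have PtP: "mmul (mtrans P) P = mident" unfolding P_def by (rule fmt_fm[OF inj])
  have h1: "mmul E P = mzero"
    unfolding Emul using mmul_mident_right[OF P] by (simp add: PtP) (simp add: msub_def mzero_def fun_eq_iff)
  have h3: "mem P a" if a: "a \<in> RCFM" and m: "mem (msub mident P) (mmul E a)" for a
  proof -
    obtain s where s: "s \<in> RCFM" "mmul E a = mmul (msub mident P) s" using m unfolding mem_def by auto
    have rows: "mmul (msub mident (fm \<sigma>)) s (\<sigma> q) j = 0" for q j
    proof -
      have "mmul (msub mident (fm \<sigma>)) s (\<sigma> q) j = mmul E a (\<sigma> q) j" using s P_def by simp
      also have "\<dots> = 0" unfolding Emul P_def
        by (simp add: msub_def fm_mul_at[OF inj] fmt_mul)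
      finally show ?thesis .
    qed
    have "s = mzero" by (rule chain_zero[OF inj inc s(1) rows])
    hence "mmul E a = mzero" using s by (simp add: mmul_mzero_right)
    hence "a = mmul P (mmul (mtrans P) a)" unfolding Emul by (simp add: msub_def mzero_def fun_eq_iff)
    thus ?thesis unfolding mem_def using mmul_RCFM[OF Pt a] by blast
  qed
  have PtE: "mmul (mtrans P) E = mzero"
  proof (intro ext)
    fix q j
    have "mmul (mtrans P) E q j = E (\<sigma> q) j" unfolding P_def by (rule fmt_mul)
    also have "\<dots> = 0" unfolding E_def P_def msub_def by (simp add: fm_fmt[OF inj] mident_def)
    finally show "mmul (mtrans P) E q j = mzero q j" by (simp add: mzero_def)
  qed
  show ?thesis unfolding P_def[symmetric]
  proof (rule generic_exact[where J = E and T = "msub mzero P"])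
    show "P \<in> RCFM" "msub mident P \<in> RCFM" "msub mident (mtrans P) \<in> RCFM" "E \<in> RCFM"
      "msub mzero P \<in> RCFM"
      using P Pt E mident_RCFM mzero_RCFM msub_RCFM by auto
    show "mmul E P = mzero" by (rule h1)
    show "msub mident P = mmul (msub mident (mtrans P)) (msub mzero P)"
      unfolding P_def by (rule chain_h2[OF inj])
    show "\<And>a. a \<in> RCFM \<Longrightarrow> mem (msub mident P) (mmul E a) \<Longrightarrow> mem P a" by (rule h3)
    show "\<And>a. a \<in> RCFM \<Longrightarrow> mem (msub mident (mtrans P)) (mmul E a)"
      unfolding P_def by (rule chain_h4[OF inj E _ PtE[unfolded P_def]])
    show "\<And>a. a \<in> RCFM \<Longrightarrow> mem (msub mident (mtrans P)) a \<Longrightarrow>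
          \<exists>a'\<in>RCFM. mem (msub mident P) (msub a (mmul E a'))"
    proof -
      fix a assume "a \<in> RCFM" "mem (msub mident (mtrans P)) a"
      have EI: "mmul E mident = msub mident (mmul (fm \<sigma>) (mtrans (fm \<sigma>)))"
        using mmul_mident_right[OF E] by (simp add: E_def P_def)
      show "\<exists>a'\<in>RCFM. mem (msub mident P) (msub a (mmul E a'))"
        using chain_h5[OF inj E mident_RCFM \<open>a \<in> RCFM\<close> EI] \<open>mem _ a\<close> unfolding P_def by blast
    qed
  qed
qed

lemma matA_fm: "matA = fm Suc" by (simp add: matA_def fm_def fun_eq_iff)

lemma part1: "\<exists>f g. short_exact (matA :: 'k::field mat) (msub mident matA) (msub mident (mtrans matA)) f g"
  unfolding matA_fm by (rule part1_gen) (auto simp: inj_Suc)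



lemma part2_gen:
  fixes \<sigma> \<tau> :: "nat \<Rightarrow> nat"
  assumes inj: "inj \<sigma>" and inc: "\<And>q. q < \<sigma> q" and injt: "inj \<tau>"
    and rng: "\<And>p. p \<in> range \<tau> \<longleftrightarrow> p \<notin> range \<sigma>"
  shows "\<exists>f g. short_exact (mzero :: 'k::field mat) (msub mident (fm \<sigma>)) (msub mident (mtrans (fm \<sigma>))) f g"
proof -
  define P :: "'k mat" where "P = fm \<sigma>"
  define J :: "'k mat" where "J = fm \<tau>"
  define E where "E = msub mident (mmul P (mtrans P))"
  have P: "P \<in> RCFM" unfolding P_def by (rule fm_RCFM[OF inj])
  have J: "J \<in> RCFM" unfolding J_def by (rule fm_RCFM[OF injt])
  have Pt: "mtrans P \<in> RCFM" by (rule mtrans_RCFM[OF P])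
  have Jt: "mtrans J \<in> RCFM" by (rule mtrans_RCFM[OF J])
  have JtJ: "mmul (mtrans J) J = mident" unfolding J_def by (rule fmt_fm[OF injt])
  have h3: "mem mzero a" if a: "a \<in> RCFM" and m: "mem (msub mident P) (mmul J a)" for a
  proof -
    obtain s where s: "s \<in> RCFM" "mmul J a = mmul (msub mident P) s" using m unfolding mem_def by auto
    have rows: "mmul (msub mident (fm \<sigma>)) s (\<sigma> q) j = 0" for q j
    proof -
      have "mmul (msub mident (fm \<sigma>)) s (\<sigma> q) j = mmul J a (\<sigma> q) j" using s P_def by simp
      also have "\<dots> = 0" unfolding J_def by (rule fm_mul_out) (use rng in blast)
      finally show ?thesis .
    qed
    have "s = mzero" by (rule chain_zero[OF inj inc s(1) rows])
    hence Ja: "mmul J a = mzero" using s by (simp add: mmul_mzero_right)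
    have "a = mmul (mmul (mtrans J) J) a" by (simp add: JtJ mmul_mident_left)
    also have "\<dots> = mmul (mtrans J) (mmul J a)" by (rule mmul_assoc[OF Jt J])
    also have "\<dots> = mmul mzero mzero" by (simp add: Ja mmul_mzero_right mmul_mzero_left)
    finally show ?thesis unfolding mem_def using mzero_RCFM by blast
  qed
  have PtJ: "mmul (mtrans (fm \<sigma>)) J = mzero"
  proof (intro ext)
    fix q j
    have "mmul (mtrans (fm \<sigma>)) J q j = J (\<sigma> q) j" by (rule fmt_mul)
    also have "\<dots> = 0" unfolding J_def fm_def using rng by auto
    finally show "mmul (mtrans (fm \<sigma>)) J q j = mzero q j" by (simp add: mzero_def)
  qed
  have JJt: "mmul J (mtrans J) = msub mident (mmul (fm \<sigma>) (mtrans (fm \<sigma>)))"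
  proof (intro ext)
    fix p q
    show "mmul J (mtrans J) p q = msub mident (mmul (fm \<sigma>) (mtrans (fm \<sigma>))) p q"
      unfolding J_def msub_def fm_fmt[OF inj] fm_fmt[OF injt] using rng[of p]
      by (auto simp: mident_def)
  qed
  show ?thesis unfolding P_def[symmetric]
  proof (rule generic_exact[where J = J and T = "msub mzero P"])
    show "mzero \<in> RCFM" "msub mident P \<in> RCFM" "msub mident (mtrans P) \<in> RCFM" "J \<in> RCFM"
      "msub mzero P \<in> RCFM"
      using P Pt J mident_RCFM mzero_RCFM msub_RCFM by auto
    show "mmul J mzero = mzero" by (rule mmul_mzero_right)
    show "msub mident P = mmul (msub mident (mtrans P)) (msub mzero P)"
      unfolding P_def by (rule chain_h2[OF inj])
    show "\<And>a. a \<in> RCFM \<Longrightarrow> mem (msub mident P) (mmul J a) \<Longrightarrow> mem mzero a" by (rule h3)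
    show "\<And>a. a \<in> RCFM \<Longrightarrow> mem (msub mident (mtrans P)) (mmul J a)"
      unfolding P_def by (rule chain_h4[OF inj J _ PtJ])
    show "\<And>a. a \<in> RCFM \<Longrightarrow> mem (msub mident (mtrans P)) a \<Longrightarrow>
          \<exists>a'\<in>RCFM. mem (msub mident P) (msub a (mmul J a'))"
    proof -
      fix a assume "a \<in> RCFM" "mem (msub mident (mtrans P)) a"
      show "\<exists>a'\<in>RCFM. mem (msub mident P) (msub a (mmul J a'))"
        using chain_h5[OF inj J Jt \<open>a \<in> RCFM\<close> JJt] \<open>mem _ a\<close> unfolding P_def by blast
    qed
  qed
qed



definition tri :: "nat \<Rightarrow> nat" where "tri n = n * (n + 1) div 2"

lemma tri_Suc: "tri (Suc m) = tri m + Suc m"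
proof -
  have "Suc m * (Suc m + 1) = m * (m + 1) + 2 * Suc m" by (simp add: algebra_simps)
  thus ?thesis unfolding tri_def by simp
qed

lemma tri_mono: "m \<le> n \<Longrightarrow> tri m \<le> tri n"
  unfolding tri_def by (intro div_le_mono mult_le_mono) auto

lemma tri_decomp: "\<exists>m i. i \<le> m \<and> p = tri m + i"
proof (induction p)
  case 0 show ?case by (rule exI[of _ 0]) (simp add: tri_def)
next
  case (Suc p)
  then obtain m i where mi: "i \<le> m" "p = tri m + i" by blast
  show ?case
  proof (cases "i < m")
    case True thus ?thesis using mi by (intro exI[of _ m] exI[of _ "Suc i"]) auto
  next
    case False thus ?thesis using mi by (intro exI[of _ "Suc m"] exI[of _ 0]) (auto simp: tri_Suc)
  qed
qed

lemma tri_uniq_aux: "i \<le> m \<Longrightarrow> m < m' \<Longrightarrow> tri m + i < tri m' + i'"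
proof -
  assume "i \<le> m" "m < m'"
  hence "tri m + i < tri (Suc m)" by (simp add: tri_Suc)
  also have "\<dots> \<le> tri m'" using \<open>m < m'\<close> by (intro tri_mono) simp
  finally show ?thesis by simp
qed

lemma tri_uniq: "i \<le> m \<Longrightarrow> i' \<le> m' \<Longrightarrow> tri m + i = tri m' + i' \<Longrightarrow> m = m' \<and> i = i'"
  by (metis linorder_neqE_nat tri_uniq_aux less_irrefl add_left_cancel)

definition dm :: "nat \<Rightarrow> nat" where "dm q = (SOME m. \<exists>i. i \<le> m \<and> q = tri m + i)"
definition di :: "nat \<Rightarrow> nat" where "di q = q - tri (dm q)"

lemma dm_di: "di q \<le> dm q \<and> q = tri (dm q) + di q"
proof -
  have "\<exists>i. i \<le> dm q \<and> q = tri (dm q) + i"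
    unfolding dm_def by (rule someI_ex) (use tri_decomp in blast)
  thus ?thesis unfolding di_def by auto
qed

lemma dm_di_eq: assumes "i \<le> m" shows "dm (tri m + i) = m" "di (tri m + i) = i"
  using tri_uniq[OF assms dm_di[THEN conjunct1], of "tri m + i"] dm_di[of "tri m + i"] by auto

definition sB :: "nat \<Rightarrow> nat" where "sB q = tri (Suc (dm q)) + di q"
definition tB :: "nat \<Rightarrow> nat" where "tB c = tri c + c"

lemma sB_inj: "inj sB"
proof (rule injI)
  fix q1 q2 assume "sB q1 = sB q2"
  hence "Suc (dm q1) = Suc (dm q2) \<and> di q1 = di q2"
    unfolding sB_def by (intro tri_uniq) (use dm_di in \<open>auto intro: le_SucI\<close>)
  thus "q1 = q2" using dm_di[of q1] dm_di[of q2] by simp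
qed

lemma sB_inc: "q < sB q"
  using dm_di[of q] unfolding sB_def by (simp add: tri_Suc)

lemma tB_inj: "inj tB"
  unfolding tB_def by (rule injI) (use tri_uniq in blast)

lemma tB_rng: "p \<in> range tB \<longleftrightarrow> p \<notin> range sB"
proof
  assume "p \<in> range tB"
  then obtain c where c: "p = tri c + c" unfolding tB_def by auto
  show "p \<notin> range sB"
  proof
    assume "p \<in> range sB"
    then obtain q where "p = tri (Suc (dm q)) + di q" unfolding sB_def by auto
    hence "c = Suc (dm q) \<and> c = di q" using tri_uniq[of c c "di q" "Suc (dm q)"] c dm_di[of q] by auto
    thus False using dm_di[of q] by simp
  qed
next
  assume np: "p \<notin> range sB"
  obtain m i where mi: "i \<le> m" "p = tri m + i" using tri_decomp by blast
  show "p \<in> range tB"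
  proof (cases "i < m")
    case True
    then obtain m' where m': "m = Suc m'" "i \<le> m'" by (cases m) auto
    have "sB (tri m' + i) = p" unfolding sB_def using dm_di_eq[OF m'(2)] m' mi by simp
    thus ?thesis using np by auto
  next
    case False thus ?thesis using mi unfolding tB_def by auto
  qed
qed

lemma matB_fm: "matB = fm sB"
proof (intro ext)
  fix p q
  have "(\<exists>n i. 0 < n \<and> i < n \<and> p = n * (n + 1) div 2 + i \<and> q = (n - 1) * n div 2 + i) \<longleftrightarrow> p = sB q"
  proof
    assume "\<exists>n i. 0 < n \<and> i < n \<and> p = n * (n + 1) div 2 + i \<and> q = (n - 1) * n div 2 + i"
    then obtain n i where h: "0 < n" "i < n" "p = n * (n + 1) div 2 + i" "q = (n - 1) * n div 2 + i" by blast
    then obtain m where m: "n = Suc m" by (cases n) auto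
    have q: "q = tri m + i" using h m unfolding tri_def by (simp add: mult.commute)
    have im: "i \<le> m" using h m by simp
    show "p = sB q" unfolding sB_def q dm_di_eq[OF im] using h m by (simp add: tri_def)
  next
    assume p: "p = sB q"
    show "\<exists>n i. 0 < n \<and> i < n \<and> p = n * (n + 1) div 2 + i \<and> q = (n - 1) * n div 2 + i"
      using dm_di[of q] p unfolding sB_def tri_def
      by (intro exI[of _ "Suc (dm q)"] exI[of _ "di q"]) (auto simp: mult.commute)
  qed
  thus "matB p q = fm sB p q" unfolding matB_def fm_def by simp
qed

theorem proposition7p11:
  shows "(\<exists>f g. short_exact (matA :: 'k::field mat) (msub mident matA) (msub mident (mtrans matA)) f g)
       \<and> (\<exists>f g. short_exact (mzero :: 'k::field mat) (msub mident matB) (msub mident (mtrans matB)) f g)"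
proof
  show "\<exists>f g. short_exact (matA :: 'k::field mat) (msub mident matA) (msub mident (mtrans matA)) f g"
    by (rule part1)
  show "\<exists>f g. short_exact (mzero :: 'k::field mat) (msub mident matB) (msub mident (mtrans matB)) f g"
    unfolding matB_fm by (rule part2_gen[OF sB_inj sB_inc tB_inj tB_rng])
qed


end
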